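(* Let $W=e^{-Q}\in\mathcal F(C^2)$ and let $\{p_m\}$ be the orthonormal polynomials with respect to $W^2(x)dx$. Then there are real numbers $A_m>0$, $B_m$ ($m\ge0$, with $A_{-1}p_{-1}:=0$) such that $xp_m(x)=A_mp_{m+1}(x)+B_mp_m(x)+A_{m-1}p_{m-1}(x)$ for all $m\ge0$, and there exist $r\in(0,1)$ and $C_1,C_2>0$ such that for all $m\ge1$: $C_1\le A_m\le C_2m^r$ and $|B_m|\le C_2m^r$.
   Context: Weight class $\mathcal F(C^2)$: $W=e^{-Q}$ where $Q:\mathbb R\to[0,\infty)$ satisfies: $Q'$ continuous and $Q(0)=0$; $Q'$ non-decreasing and $Q''$ exists on $\mathbb R\setminus\{0\}$; $Q(t)\to\infty$ as $|t|\to\infty$; $T(t)=tQ'(t)/Q(t)$ is quasi-increasing on $(0,\infty)$ (i.e. $T(x)\le C_1'T(y)$ for $0<x<y$) and analogously for $y<x<0$, with $T\ge\Lambda>1$ on $\mathbb R\setminus\{0\}$; and $Q''(x)/|Q'(x)|\le C_2'|Q'(x)|/Q(x)$ for $x\ne0$. Orthonormal polynomials have positive leading coefficients. *)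

theory Defs
  imports "HOL-Analysis.Analysis" "HOL-Computational_Algebra.Polynomial"
begin

definition T_fun :: "(real \<Rightarrow> real) \<Rightarrow> real \<Rightarrow> real" where
  "T_fun Q t = t * deriv Q t / Q t"

text \<open>W = exp(-Q) belongs to the class F(C^2) (stated as a condition on Q).\<close>
definition class_FC2 :: "(real \<Rightarrow> real) \<Rightarrow> bool" where
  "class_FC2 Q \<longleftrightarrow>
     (\<forall>x. 0 \<le> Q x) \<and> Q 0 = 0 \<and>
     (\<forall>x. Q differentiable (at x)) \<and> continuous_on UNIV (deriv Q) \<and>
     mono (deriv Q) \<and>
     (\<forall>x. x \<noteq> 0 \<longrightarrow> deriv Q differentiable (at x)) \<and>
     filterlim Q at_top at_infinity \<and>
     (\<exists>C1'. (\<forall>x y. 0 < x \<and> x < y \<longrightarrow> T_fun Q x \<le> C1' * T_fun Q y) \<and>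
            (\<forall>x y. y < x \<and> x < 0 \<longrightarrow> T_fun Q x \<le> C1' * T_fun Q y)) \<and>
     (\<exists>\<Lambda>>1. \<forall>t. t \<noteq> 0 \<longrightarrow> \<Lambda> \<le> T_fun Q t) \<and>
     (\<exists>C2'. \<forall>x. x \<noteq> 0 \<longrightarrow>
        deriv (deriv Q) x / \<bar>deriv Q x\<bar> \<le> C2' * \<bar>deriv Q x\<bar> / Q x)"

definition orthonormal_polys :: "(real \<Rightarrow> real) \<Rightarrow> (nat \<Rightarrow> real poly) \<Rightarrow> bool" where
  "orthonormal_polys Q p \<longleftrightarrow>
     (\<forall>m. degree (p m) = m \<and> lead_coeff (p m) > 0) \<and>
     (\<forall>m n. integrable lborel (\<lambda>x. poly (p m) x * poly (p n) x * (exp (- Q x))\<^sup>2) \<and>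
            (LINT x|lborel. poly (p m) x * poly (p n) x * (exp (- Q x))\<^sup>2)
              = (if m = n then 1 else 0))"

end

theory Submission imports Defs begin

locale OP =
  fixes Q :: "real \<Rightarrow> real" and p :: "nat \<Rightarrow> real poly" and \<Lambda> :: real
  assumes Qnn: "\<And>x. 0 \<le> Q x" and Q0: "Q 0 = 0"
  and Qd: "\<And>x. (Q has_real_derivative deriv Q x) (at x)"
  and Q'c: "continuous_on UNIV (deriv Q)"
  and Q'm: "mono (deriv Q)"
  and Qlim: "filterlim Q at_top at_infinity"
  and Lam: "1 < \<Lambda>"
  and TL: "\<And>t. t \<noteq> 0 \<Longrightarrow> \<Lambda> \<le> T_fun Q t"
  and deg: "\<And>m. degree (p m) = m" and lc: "\<And>m. lead_coeff (p m) > 0"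
  and intg: "\<And>m n. integrable lborel (\<lambda>x. poly (p m) x * poly (p n) x * (exp (- Q x))\<^sup>2)"
  and orth: "\<And>m n. (LINT x|lborel. poly (p m) x * poly (p n) x * (exp (- Q x))\<^sup>2) = (if m = n then 1 else 0)"
begin

definition w :: "real \<Rightarrow> real" where "w x = (exp (- Q x))\<^sup>2"
definition IP :: "real poly \<Rightarrow> real" where "IP h = (LINT x|lborel. poly h x * w x)"

lemma w_pos: "w x > 0" by (simp add: w_def)

lemma IPpp: "IP (p m * p n) = (if m = n then 1 else 0)"
  using orth[of m n] by (simp add: IP_def w_def mult.assoc)

lemma p0: "p 0 = [:lead_coeff (p 0):]"
  using deg[of 0] degree_0_id[of "p 0"] by simp

lemma span: "degree q \<le> n \<Longrightarrow> \<exists>c. q = (\<Sum>j\<le>n. smult (c j) (p j))"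
proof (induction n arbitrary: q)
  case 0
  then have "q = [:coeff q 0:]" using degree_0_id[of q] by simp
  moreover have "lead_coeff (p 0) \<noteq> 0" using lc[of 0] by (metis less_irrefl)
  ultimately have "q = smult (coeff q 0 / lead_coeff (p 0)) (p 0)"
    by (subst p0) simp
  then show ?case by (intro exI[of _ "\<lambda>_. coeff q 0 / lead_coeff (p 0)"]) simp
next
  case (Suc n)
  define c where "c = coeff q (Suc n) / lead_coeff (p (Suc n))"
  define q' where "q' = q - smult c (p (Suc n))"
  have "degree q' \<le> n"
  proof (rule degree_le, intro allI impI)
    fix i assume "n < i"
    show "coeff q' i = 0"
    proof (cases "i = Suc n")
      case True then show ?thesis using lc[of "Suc n"] deg[of "Suc n"] by (simp add: q'_def c_def)
    next
      case False
      with \<open>n < i\<close> have "Suc n < i" by simp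
      then have "coeff q i = 0" "coeff (p (Suc n)) i = 0" using Suc.prems deg[of "Suc n"]
        by (auto intro: coeff_eq_0)
      then show ?thesis by (simp add: q'_def)
    qed
  qed
  then obtain d where d: "q' = (\<Sum>j\<le>n. smult (d j) (p j))" using Suc.IH by blast
  have "q = (\<Sum>j\<le>Suc n. smult ((d(Suc n := c)) j) (p j))"
    using d by (simp add: q'_def algebra_simps)
  then show ?case by blast
qed

lemma intpw: "integrable lborel (\<lambda>x. poly h x * w x)"
proof -
  obtain c where c: "h = (\<Sum>j\<le>degree h. smult (c j) (p j))" using span[of h "degree h"] by blast
  define k where "k = lead_coeff (p 0)"
  have k: "k \<noteq> 0" using lc[of 0] unfolding k_def by (metis less_irrefl)
  have pk: "poly (p 0) x = k" for x by (subst p0) (simp add: k_def)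
  have "poly h x * w x = (\<Sum>j\<le>degree h. c j / k * (poly (p j) x * poly (p 0) x * (exp (- Q x))\<^sup>2))" for x
    apply (subst c) using k by (simp add: pk poly_sum sum_distrib_right w_def mult.assoc)
  moreover have "integrable lborel (\<lambda>x. \<Sum>j\<le>degree h. c j / k * (poly (p j) x * poly (p 0) x * (exp (- Q x))\<^sup>2))"
    by (intro Bochner_Integration.integrable_sum ballI integrable_mult_right intg)
  ultimately show ?thesis by simp
qed

lemma IP_add: "IP (f + g) = IP f + IP g"
  unfolding IP_def by (simp add: distrib_right Bochner_Integration.integral_add intpw)
lemma IP_diff: "IP (f - g) = IP f - IP g"
  unfolding IP_def by (simp add: left_diff_distrib Bochner_Integration.integral_diff intpw)
lemma IP_smult: "IP (smult c f) = c * IP f"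
  unfolding IP_def by (simp add: mult.assoc)
lemma IP_0: "IP 0 = 0" by (simp add: IP_def)
lemma IP_sum: "IP (\<Sum>j\<in>A. f j) = (\<Sum>j\<in>A. IP (f j))"
  by (induction A rule: infinite_finite_induct) (auto simp: IP_add IP_0)

lemma expansion:
  assumes "q = (\<Sum>j\<le>n. smult (c j) (p j))" "i \<le> n"
  shows "IP (q * p i) = c i"
proof -
  have "IP (q * p i) = (\<Sum>j\<le>n. c j * IP (p j * p i))"
    by (simp add: assms(1) sum_distrib_right IP_sum IP_smult)
  also have "\<dots> = (\<Sum>j\<le>n. if j = i then c j else 0)"
    by (intro sum.cong) (auto simp: IPpp)
  also have "\<dots> = c i" using assms(2) by simp
  finally show ?thesis .
qed

lemma ortho:
  assumes "\<And>i. i \<ge> m \<Longrightarrow> coeff q i = 0"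
  shows "IP (q * p m) = 0"
proof (cases m)
  case 0
  then have "q = 0" using assms by (simp add: poly_eq_iff)
  then show ?thesis by (simp add: IP_def)
next
  case (Suc k)
  have "degree q \<le> k" using assms Suc by (intro degree_le) auto
  then obtain c where c: "q = (\<Sum>j\<le>k. smult (c j) (p j))" using span by blast
  have "IP (q * p m) = (\<Sum>j\<le>k. c j * IP (p j * p m))"
    by (simp add: c sum_distrib_right IP_sum IP_smult)
  also have "\<dots> = 0" using Suc by (intro sum.neutral) (auto simp: IPpp)
  finally show ?thesis .
qed

lemma lead_IP:
  assumes "degree q \<le> m"
  shows "IP (q * p m) = coeff q m / lead_coeff (p m)"
proof -
  define c where "c = coeff q m / lead_coeff (p m)"
  have l: "lead_coeff (p m) \<noteq> 0" using lc[of m] by (metis less_irrefl)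
  have "IP ((q - smult c (p m)) * p m) = 0"
  proof (rule ortho)
    fix i assume "m \<le> i"
    show "coeff (q - smult c (p m)) i = 0"
    proof (cases "i = m")
      case True then show ?thesis using l deg[of m] by (simp add: c_def)
    next
      case False
      then have "coeff q i = 0" "coeff (p m) i = 0" using assms deg[of m] \<open>m \<le> i\<close>
        by (auto intro: coeff_eq_0)
      then show ?thesis by simp
    qed
  qed
  then have "IP (q * p m) = c * IP (p m * p m)"
    by (simp add: left_diff_distrib IP_diff IP_smult)
  then show ?thesis by (simp add: IPpp c_def)
qed

definition A :: "nat \<Rightarrow> real" where "A m = lead_coeff (p m) / lead_coeff (p (Suc m))"
definition B :: "nat \<Rightarrow> real" where "B m = IP (pCons 0 (p m) * p m)"

lemma lc_ne: "lead_coeff (p m) \<noteq> 0" using lc[of m] by (metis less_irrefl)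

lemma A_pos: "A m > 0" using lc[of m] lc[of "Suc m"] by (simp add: A_def)

lemma coeff_pm_big: "i > m \<Longrightarrow> coeff (p m) i = 0"
  using deg[of m] by (auto intro: coeff_eq_0)

lemma IP_comm: "IP (f * g) = IP (g * f)" by (simp add: mult.commute)

lemma IPX_lower: "Suc j < m \<Longrightarrow> IP (pCons 0 (p m) * p j) = 0"
proof -
  assume a: "Suc j < m"
  have "IP (pCons 0 (p m) * p j) = IP (pCons 0 (p j) * p m)"
    by (simp add: algebra_simps)
  also have "\<dots> = 0"
  proof (rule ortho)
    fix i assume "m \<le> i"
    then show "coeff (pCons 0 (p j)) i = 0" using a
      by (cases i) (auto intro: coeff_pm_big)
  qed
  finally show ?thesis .
qed

lemma IPX_prev: "IP (pCons 0 (p (Suc k)) * p k) = A k"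
proof -
  have "IP (pCons 0 (p (Suc k)) * p k) = IP (pCons 0 (p k) * p (Suc k))"
    by (simp add: algebra_simps)
  also have "\<dots> = coeff (pCons 0 (p k)) (Suc k) / lead_coeff (p (Suc k))"
    by (rule lead_IP) (metis Suc_le_mono deg degree_pCons_le le_trans)
  also have "\<dots> = A k" by (simp add: A_def deg)
  finally show ?thesis .
qed

lemma recur:
  "pCons 0 (p m) = smult (A m) (p (Suc m)) + smult (B m) (p m)
     + (if m = 0 then 0 else smult (A (m - 1)) (p (m - 1)))"
proof -
  define r where "r = pCons 0 (p m) - (smult (A m) (p (Suc m)) + smult (B m) (p m)
     + (if m = 0 then 0 else smult (A (m - 1)) (p (m - 1))))"
  have "degree r \<le> m"
  proof (rule degree_le, intro allI impI)
    fix i assume "m < i"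
    show "coeff r i = 0"
    proof (cases "i = Suc m")
      case True
      then show ?thesis using lc_ne[of "Suc m"]
        by (simp add: r_def A_def deg coeff_pm_big)
    next
      case False
      with \<open>m < i\<close> obtain k where k: "i = Suc k" "m < k" by (cases i) auto
      then show ?thesis by (auto simp: r_def coeff_pm_big)
    qed
  qed
  then obtain c where c: "r = (\<Sum>j\<le>m. smult (c j) (p j))" using span by blast
  have "c j = 0" if "j \<le> m" for j
  proof -
    have "c j = IP (r * p j)" using expansion[OF c that] by simp
    also have "\<dots> = IP (pCons 0 (p m) * p j) - (A m * IP (p (Suc m) * p j) + B m * IP (p m * p j)
       + (if m = 0 then 0 else A (m - 1) * IP (p (m - 1) * p j)))"
      by (simp add: r_def algebra_simps IP_diff IP_add IP_smult IP_0)
    also have "\<dots> = 0"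
    proof -
      have jm: "j \<le> m" by fact
      consider "j = m" | "Suc j = m" | "Suc j < m" using jm by linarith
      then show ?thesis
      proof cases
        case 1 then show ?thesis by (cases m) (simp_all add: IPpp B_def)
      next
        case 2 then show ?thesis using IPX_prev[of j] by (auto simp: IPpp)
      next
        case 3 then show ?thesis using IPX_lower[of j m] by (auto simp: IPpp)
      qed
    qed
    finally show ?thesis .
  qed
  then have "r = 0" using c by simp
  then show ?thesis by (simp add: r_def)
qed

lemma Qpos: "x \<noteq> 0 \<Longrightarrow> Q x > 0"
  using TL[of x] Lam Qnn[of x] by (cases "Q x = 0") (auto simp: T_fun_def)

lemma xQ'_ge: "x \<noteq> 0 \<Longrightarrow> \<Lambda> * Q x \<le> x * deriv Q x"
  using TL[of x] Qpos[of x] by (simp add: T_fun_def pos_le_divide_eq)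

lemma xQ'_nn: "0 \<le> x * deriv Q x"
proof (cases "x = 0")
  case False
  then show ?thesis using xQ'_ge[of x] Qpos[of x] Lam
    by (smt (verit) mult_pos_pos)
qed simp

lemma Q'0: "deriv Q 0 = 0"
  by (rule DERIV_local_min[OF Qd, of 1]) (auto simp: Q0 Qnn)

lemma Q'_sign_pos: "0 \<le> x \<Longrightarrow> 0 \<le> deriv Q x"
  using Q'm Q'0 by (metis monoD)
lemma Q'_sign_neg: "x \<le> 0 \<Longrightarrow> deriv Q x \<le> 0"
  using Q'm Q'0 by (metis monoD)

definition K :: real where "K = max (deriv Q 1) (- deriv Q (-1))"

lemma absQ'_le: "\<bar>deriv Q x\<bar> \<le> K + x * deriv Q x"
proof (cases "\<bar>x\<bar> \<le> 1")
  case True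
  then have "deriv Q (-1) \<le> deriv Q x" "deriv Q x \<le> deriv Q 1"
    using Q'm by (auto intro: monoD)
  then have "\<bar>deriv Q x\<bar> \<le> K" by (auto simp: K_def)
  then show ?thesis using xQ'_nn[of x] by linarith
next
  case False
  have K: "0 \<le> K" using Q'_sign_pos[of 1] by (simp add: K_def)
  have "\<bar>deriv Q x\<bar> \<le> \<bar>x\<bar> * \<bar>deriv Q x\<bar>" using False
    by (simp add: mult_le_cancel_right1)
  also have "\<dots> = x * deriv Q x" using xQ'_nn[of x] by (simp add: abs_mult[symmetric])
  finally show ?thesis using K by linarith
qed

lemma K_pos: "0 \<le> K" using Q'_sign_pos[of 1] by (simp add: K_def)

end

lemma growth_gen:
  fixes R R' :: "real \<Rightarrow> real" and L :: real
  assumes d: "\<And>t. t > 0 \<Longrightarrow> (R has_real_derivative R' t) (at t)"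
    and g: "\<And>t. t \<ge> 1 \<Longrightarrow> L * R t \<le> t * R' t"
    and x: "1 \<le> x"
  shows "R 1 * x powr L \<le> R x"
proof -
  define G where "G t = R t * t powr (- L)" for t
  have dG: "(G has_real_derivative (R' t * t powr (- L) + R t * (- L * t powr (- L - 1)))) (at t)"
    if "t > 0" for t
  proof -
    have "((\<lambda>t. t powr (- L)) has_real_derivative (- L) * t powr (- L - 1)) (at t)"
      using has_real_derivative_powr[OF that, of "- L"] by simp
    from DERIV_mult[OF d[OF that] this] show ?thesis unfolding G_def by (simp add: mult.commute)
  qed
  have "G 1 \<le> G x"
  proof (rule DERIV_nonneg_imp_increasing_open[OF x])
    fix t assume t: "1 < t" "t < x"
    have "R' t * t powr (- L) + R t * (- L * t powr (- L - 1))
        = t powr (- L - 1) * (t * R' t - L * R t)"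
      using t by (simp add: powr_diff powr_minus field_simps)
    also have "\<dots> \<ge> 0" using g[of t] t by simp
    finally show "\<exists>y. (G has_real_derivative y) (at t) \<and> 0 \<le> y"
      using dG[of t] t by (intro exI conjI) auto
  next
    show "continuous_on {1..x} G"
    proof (rule continuous_at_imp_continuous_on, intro ballI)
      fix t assume "t \<in> {1..x}"
      then have "t > 0" by simp
      from DERIV_isCont[OF dG[OF this]] show "isCont G t" .
    qed
  qed
  then have "R 1 \<le> R x * x powr (- L)" by (simp add: G_def)
  then have "R 1 * x powr L \<le> R x * x powr (- L) * x powr L"
    using x by (intro mult_right_mono) auto
  also have "\<dots> = R x" using x by (simp add: powr_minus field_simps)
  finally show ?thesis .
qed

context OP begin

definition c0 :: real where "c0 = min (Q 1) (Q (-1))"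

lemma c0_pos: "c0 > 0" using Qpos[of 1] Qpos[of "-1"] by (simp add: c0_def)

lemma growth: "1 \<le> \<bar>x\<bar> \<Longrightarrow> c0 * \<bar>x\<bar> powr \<Lambda> \<le> Q x"
proof (cases "x \<ge> 0")
  case True
  assume a: "1 \<le> \<bar>x\<bar>"
  have "Q 1 * x powr \<Lambda> \<le> Q x"
    by (rule growth_gen[where R'="deriv Q"]) (use Qd xQ'_ge a True in auto)
  moreover have "c0 * x powr \<Lambda> \<le> Q 1 * x powr \<Lambda>" by (intro mult_right_mono) (auto simp: c0_def)
  ultimately show ?thesis using True by simp
next
  case False
  assume a: "1 \<le> \<bar>x\<bar>"
  have "Q (- 1) * (-x) powr \<Lambda> \<le> Q (- (-x))"
  proof (rule growth_gen[where R="\<lambda>t. Q (- t)" and R'="\<lambda>t. - deriv Q (- t)", simplified])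
    fix t :: real assume "t > 0"
    show "((\<lambda>t. Q (- t)) has_real_derivative - deriv Q (- t)) (at t)"
      using DERIV_chain2[OF Qd[of "-t"] DERIV_minus[OF DERIV_ident]] by simp
  next
    fix t :: real assume "1 \<le> t"
    then show "\<Lambda> * Q (- t) \<le> - (t * deriv Q (- t))" using xQ'_ge[of "-t"] by simp
  next
    show "1 \<le> - x" using a False by simp
  qed
  moreover have "c0 * (-x) powr \<Lambda> \<le> Q (-1) * (-x) powr \<Lambda>" by (intro mult_right_mono) (auto simp: c0_def)
  ultimately have "c0 * (-x) powr \<Lambda> \<le> Q x" by simp
  then show ?thesis using False by simp
qed

lemma lin_growth: "c0 * \<bar>x\<bar> - c0 \<le> Q x"
proof (cases "1 \<le> \<bar>x\<bar>")
  case True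
  have "\<bar>x\<bar> powr 1 \<le> \<bar>x\<bar> powr \<Lambda>" using True Lam by (intro powr_mono) auto
  then have "c0 * \<bar>x\<bar> \<le> c0 * \<bar>x\<bar> powr \<Lambda>" using True c0_pos by (simp add: mult_left_mono)
  then show ?thesis using growth[OF True] c0_pos by linarith
next
  case False
  then have "c0 * \<bar>x\<bar> \<le> c0 * 1" using c0_pos by (intro mult_left_mono) auto
  then show ?thesis using Qnn[of x] by linarith
qed

end

lemma pow_le_exp:
  fixes a y :: real assumes a: "a > 0" and y: "0 \<le> y"
  shows "y ^ n \<le> (real n / a) ^ n * exp (a * y)"
proof (cases "n = 0")
  case True then show ?thesis using a y by simp
next
  case False
  have "(a * y / real n) ^ n \<le> (1 + (a * y) / real n) ^ n"
    using a y by (intro power_mono) auto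
  also have "\<dots> \<le> exp (a * y)"
  proof (rule exp_ge_one_plus_x_over_n_power_n)
    have "0 \<le> a * y" using a y by simp
    then show "- real n \<le> a * y" by linarith
  qed (use False in auto)
  finally have "(a * y / real n) ^ n \<le> exp (a * y)" .
  then have "(real n / a) ^ n * (a * y / real n) ^ n \<le> (real n / a) ^ n * exp (a * y)"
    using a by (intro mult_left_mono) auto
  also have "(real n / a) ^ n * (a * y / real n) ^ n = y ^ n"
    using a False by (simp add: power_mult_distrib[symmetric])
  finally show ?thesis .
qed

context OP begin

lemma poly_exp_bound: "\<exists>M. \<forall>x. \<bar>poly h x\<bar> * exp (- Q x) \<le> M"
proof -
  define S where "S = (\<Sum>i\<le>degree h. \<bar>coeff h i\<bar> * (real i / c0) ^ i)"
  have "\<bar>poly h x\<bar> * exp (- Q x) \<le> S * exp c0" for x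
  proof -
    have "\<bar>poly h x\<bar> \<le> (\<Sum>i\<le>degree h. \<bar>coeff h i\<bar> * \<bar>x\<bar> ^ i)"
      unfolding poly_altdef by (rule order_trans[OF sum_abs]) (simp add: abs_mult power_abs)
    also have "\<dots> \<le> (\<Sum>i\<le>degree h. \<bar>coeff h i\<bar> * ((real i / c0) ^ i * exp (c0 * \<bar>x\<bar>)))"
      by (intro sum_mono mult_left_mono pow_le_exp c0_pos) auto
    also have "\<dots> = S * exp (c0 * \<bar>x\<bar>)" by (simp add: S_def sum_distrib_right mult.assoc)
    finally have 1: "\<bar>poly h x\<bar> \<le> S * exp (c0 * \<bar>x\<bar>)" .
    have 2: "exp (- Q x) \<le> exp (c0 - c0 * \<bar>x\<bar>)" using lin_growth[of x] by simp
    have "\<bar>poly h x\<bar> * exp (- Q x) \<le> S * exp (c0 * \<bar>x\<bar>) * exp (c0 - c0 * \<bar>x\<bar>)"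
      by (intro mult_mono 1 2) (use 1 in auto)
    also have "\<dots> = S * exp c0" by (simp add: mult.assoc exp_add[symmetric])
    finally show ?thesis .
  qed
  then show ?thesis by blast
qed

lemma Q_cont: "isCont Q x" using DERIV_isCont[OF Qd] .
lemma Q'_cont: "isCont (deriv Q) x"
  using Q'c by (simp add: continuous_on_eq_continuous_at)
lemma Q_cont_on: "continuous_on UNIV Q"
  using Q_cont by (simp add: continuous_on_eq_continuous_at)

lemma expQ_top: "((\<lambda>x. exp (- Q x)) \<longlongrightarrow> 0) at_top"
proof -
  have "filterlim Q at_top at_top" using filterlim_mono[OF Qlim order_refl at_top_le_at_infinity] .
  then have "filterlim (\<lambda>x. - Q x) at_bot at_top" by (simp add: filterlim_uminus_at_bot)
  from filterlim_compose[OF exp_at_bot this] show ?thesis .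
qed
lemma expQ_bot: "((\<lambda>x. exp (- Q x)) \<longlongrightarrow> 0) at_bot"
proof -
  have "filterlim Q at_top at_bot" using filterlim_mono[OF Qlim order_refl at_bot_le_at_infinity] .
  then have "filterlim (\<lambda>x. - Q x) at_bot at_bot" by (simp add: filterlim_uminus_at_bot)
  from filterlim_compose[OF exp_at_bot this] show ?thesis .
qed

lemma dexpQ: "((\<lambda>x. exp (- Q x)) has_real_derivative - deriv Q x * exp (- Q x)) (at x)"
  using DERIV_chain2[OF DERIV_exp DERIV_minus[OF Qd[of x]]] by (simp add: mult.commute)

lemma isCont_Q'e: "isCont (\<lambda>x. deriv Q x * exp (- Q x)) x"
  by (intro continuous_intros Q'_cont Q_cont)

lemma int_Q'e: "integrable lborel (\<lambda>x. \<bar>deriv Q x\<bar> * exp (- Q x))"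
proof -
  have r: "set_integrable lborel (einterval (ereal 0) \<infinity>) (\<lambda>x. deriv Q x * exp (- Q x))"
  proof (rule interval_integral_FTC_nonneg[where F="\<lambda>x. - exp (- Q x)" and A="- exp (- Q 0)" and B=0])
    fix x show "((\<lambda>x. - exp (- Q x)) has_real_derivative deriv Q x * exp (- Q x)) (at x)"
      using DERIV_minus[OF dexpQ[of x]] by simp
    show "isCont (\<lambda>x. deriv Q x * exp (- Q x)) x" by (rule isCont_Q'e)
  next
    show "AE x in lborel. ereal 0 < ereal x \<longrightarrow> ereal x < \<infinity> \<longrightarrow> 0 \<le> deriv Q x * exp (- Q x)"
      using Q'_sign_pos by auto
  next
    have "isCont (\<lambda>x. - exp (- Q x)) 0" by (intro continuous_intros Q_cont)
    then have "((\<lambda>x. - exp (- Q x)) \<longlongrightarrow> - exp (- Q 0)) (at_right 0)"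
      using continuous_at_imp_continuous_at_within continuous_within by blast
    then show "(((\<lambda>x. - exp (- Q x)) \<circ> real_of_ereal) \<longlongrightarrow> - exp (- Q 0)) (at_right (ereal 0))"
      by (simp add: ereal_tendsto_simps1)
  next
    have "((\<lambda>x. - exp (- Q x)) \<longlongrightarrow> - 0) at_top" by (intro tendsto_minus expQ_top)
    then show "(((\<lambda>x. - exp (- Q x)) \<circ> real_of_ereal) \<longlongrightarrow> 0) (at_left \<infinity>)"
      by (simp add: ereal_tendsto_simps1)
  qed simp
  have l: "set_integrable lborel (einterval (-\<infinity>) (ereal 0)) (\<lambda>x. - (deriv Q x * exp (- Q x)))"
  proof (rule interval_integral_FTC_nonneg[where F="\<lambda>x. exp (- Q x)" and A="0" and B="exp (- Q 0)"])
    fix x show "((\<lambda>x. exp (- Q x)) has_real_derivative - (deriv Q x * exp (- Q x))) (at x)"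
      using dexpQ[of x] by simp
    show "isCont (\<lambda>x. - (deriv Q x * exp (- Q x))) x" by (intro continuous_intros isCont_Q'e)
  next
    show "AE x in lborel. - \<infinity> < ereal x \<longrightarrow> ereal x < ereal 0 \<longrightarrow> 0 \<le> - (deriv Q x * exp (- Q x))"
      using Q'_sign_neg by (auto simp: mult_nonpos_nonneg)
  next
    have "isCont (\<lambda>x. exp (- Q x)) 0" by (intro continuous_intros Q_cont)
    then have "((\<lambda>x. exp (- Q x)) \<longlongrightarrow> exp (- Q 0)) (at_left 0)"
      using continuous_at_imp_continuous_at_within continuous_within by blast
    then show "(((\<lambda>x. exp (- Q x)) \<circ> real_of_ereal) \<longlongrightarrow> exp (- Q 0)) (at_left (ereal 0))"
      by (simp add: ereal_tendsto_simps1)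
  next
    show "(((\<lambda>x. exp (- Q x)) \<circ> real_of_ereal) \<longlongrightarrow> 0) (at_right (- \<infinity>))"
      using expQ_bot by (simp add: ereal_tendsto_simps1)
  qed simp
  have "integrable lborel (\<lambda>x. indicator {0<..} x * (deriv Q x * exp (- Q x))
            + indicator {..<0} x * (- (deriv Q x * exp (- Q x))))"
    using r l by (intro Bochner_Integration.integrable_add) (auto simp: set_integrable_def)
  moreover have "\<bar>deriv Q x\<bar> * exp (- Q x) = indicator {0<..} x * (deriv Q x * exp (- Q x))
            + indicator {..<0} x * (- (deriv Q x * exp (- Q x)))" for x
    using Q'_sign_pos[of x] Q'_sign_neg[of x] Q'0
    by (cases x "0::real" rule: linorder_cases) (auto simp: indicator_def)
  ultimately show ?thesis by simp
qed

lemma poly_exp_bound': "\<exists>M\<ge>0. \<forall>x. \<bar>poly h x\<bar> * exp (- Q x) \<le> M"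
  using poly_exp_bound[of h] by (meson max.cobounded1 max.coboundedI2 order.trans)

lemma w_eq: "w x = exp (- Q x) * exp (- Q x)" by (simp add: w_def power2_eq_square)

lemma meas: "continuous_on UNIV f \<Longrightarrow> f \<in> borel_measurable lborel"
  using borel_measurable_continuous_onI by simp

lemma cont_Q'hw: "continuous_on UNIV (\<lambda>x. deriv Q x * poly h x * w x)"
  unfolding w_def using Q_cont Q'_cont
  by (intro continuous_at_imp_continuous_on ballI continuous_intros) auto

lemma int_Q'hw: "integrable lborel (\<lambda>x. deriv Q x * poly h x * w x)"
proof -
  obtain M where M: "M \<ge> 0" "\<And>x. \<bar>poly h x\<bar> * exp (- Q x) \<le> M" using poly_exp_bound' by blast
  show ?thesis
  proof (rule Bochner_Integration.integrable_bound)
    show "integrable lborel (\<lambda>x. M * (\<bar>deriv Q x\<bar> * exp (- Q x)))"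
      using int_Q'e by simp
    show "(\<lambda>x. deriv Q x * poly h x * w x) \<in> borel_measurable lborel" by (rule meas[OF cont_Q'hw])
    show "AE x in lborel. norm (deriv Q x * poly h x * w x) \<le> norm (M * (\<bar>deriv Q x\<bar> * exp (- Q x)))"
    proof (rule AE_I2)
      fix x
      have "norm (deriv Q x * poly h x * w x) = (\<bar>poly h x\<bar> * exp (- Q x)) * (\<bar>deriv Q x\<bar> * exp (- Q x))"
        by (simp add: w_eq abs_mult)
      also have "\<dots> \<le> M * (\<bar>deriv Q x\<bar> * exp (- Q x))"
        by (intro mult_right_mono M(2)) auto
      also have "\<dots> = norm (M * (\<bar>deriv Q x\<bar> * exp (- Q x)))" using M(1) by (simp add: abs_mult)
      finally show "norm (deriv Q x * poly h x * w x) \<le> norm (M * (\<bar>deriv Q x\<bar> * exp (- Q x)))" .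
    qed
  qed
qed

definition J :: "real poly \<Rightarrow> real" where "J h = (LINT x|lborel. deriv Q x * poly h x * w x)"

lemma dw: "(w has_real_derivative - 2 * deriv Q x * w x) (at x)"
proof -
  have "((\<lambda>x. exp (- Q x) * exp (- Q x)) has_real_derivative
     (- deriv Q x * exp (- Q x)) * exp (- Q x) + exp (- Q x) * (- deriv Q x * exp (- Q x))) (at x)"
    using DERIV_mult[OF dexpQ dexpQ, of x] by (simp add: algebra_simps)
  then show ?thesis by (simp add: w_eq[abs_def] w_eq algebra_simps)
qed

lemma IBP: "IP (pderiv h) = 2 * J h"
proof -
  obtain M where M: "M \<ge> 0" "\<And>x. \<bar>poly h x\<bar> * exp (- Q x) \<le> M" using poly_exp_bound' by blast
  define f where "f x = poly (pderiv h) x * w x - 2 * (deriv Q x * poly h x * w x)" for x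
  have fint: "integrable lborel f" unfolding f_def
    by (intro Bochner_Integration.integrable_diff integrable_mult_right intpw int_Q'hw)
  have bnd: "norm (poly h x * w x) \<le> M * exp (- Q x)" for x
  proof -
    have "norm (poly h x * w x) = (\<bar>poly h x\<bar> * exp (- Q x)) * exp (- Q x)" by (simp add: w_eq abs_mult)
    also have "\<dots> \<le> M * exp (- Q x)" by (intro mult_right_mono M(2)) auto
    finally show ?thesis .
  qed
  have "interval_lebesgue_integral lborel (-\<infinity>) \<infinity> f = 0 - 0"
  proof (rule interval_integral_FTC_integrable[where F="\<lambda>x. poly h x * w x"])
    fix x
    have "((\<lambda>x. poly h x * w x) has_real_derivative poly (pderiv h) x * w x + poly h x * (- 2 * deriv Q x * w x)) (at x)"
      using DERIV_mult[OF poly_DERIV dw, of h x] by (simp add: algebra_simps)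
    then show "((\<lambda>x. poly h x * w x) has_vector_derivative f x) (at x)"
      unfolding has_real_derivative_iff_has_vector_derivative[symmetric] f_def
      by (simp add: algebra_simps)
    show "isCont f x" unfolding f_def w_def using Q_cont Q'_cont
      by (intro continuous_intros) auto
  next
    show "set_integrable lborel (einterval (- \<infinity>) \<infinity>) f" using fint by (simp add: set_integrable_def)
  next
    have "((\<lambda>x. poly h x * w x) \<longlongrightarrow> 0) at_bot"
    proof -
      have e: "\<forall>\<^sub>F x in at_bot. norm (poly h x * w x) \<le> M * exp (- Q x)"
        by (intro always_eventually allI bnd)
      from Lim_null_comparison[OF e tendsto_mult_right_zero[OF expQ_bot]] show ?thesis .
    qed
    then show "(((\<lambda>x. poly h x * w x) \<circ> real_of_ereal) \<longlongrightarrow> 0) (at_right (- \<infinity>))"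
      by (simp add: ereal_tendsto_simps1)
  next
    have "((\<lambda>x. poly h x * w x) \<longlongrightarrow> 0) at_top"
    proof -
      have e: "\<forall>\<^sub>F x in at_top. norm (poly h x * w x) \<le> M * exp (- Q x)"
        by (intro always_eventually allI bnd)
      from Lim_null_comparison[OF e tendsto_mult_right_zero[OF expQ_top]] show ?thesis .
    qed
    then show "(((\<lambda>x. poly h x * w x) \<circ> real_of_ereal) \<longlongrightarrow> 0) (at_left \<infinity>)"
      by (simp add: ereal_tendsto_simps1)
  qed simp
  then have "(LINT x|lborel. f x) = 0"
    by (simp add: interval_lebesgue_integral_def set_lebesgue_integral_def)
  then show ?thesis unfolding f_def IP_def J_def
    by (simp add: Bochner_Integration.integral_diff intpw int_Q'hw)
qed

lemma pCons0_mult: "pCons 0 a * b = pCons 0 (a * b)" by (simp add: mult_pCons_left)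

lemma IP_Xpd: "IP (pCons 0 (pderiv (p m)) * p m) = real m"
proof (cases m)
  case 0
  have "pderiv (p 0) = 0" by (subst p0) (simp add: pderiv_pCons)
  then show ?thesis using 0 by (simp add: IP_0)
next
  case (Suc k)
  have d: "degree (pCons 0 (pderiv (p m))) \<le> m"
    using degree_pCons_le[of 0 "pderiv (p m)"] degree_pderiv[of "p m"] deg[of m] Suc by simp
  have "IP (pCons 0 (pderiv (p m)) * p m) = coeff (pCons 0 (pderiv (p m))) m / lead_coeff (p m)"
    by (rule lead_IP[OF d])
  also have "\<dots> = real m" using Suc lc_ne[of m] by (simp add: coeff_pderiv deg)
  finally show ?thesis .
qed

lemma E1: "J (pCons 0 (p m * p m)) = real m + 1 / 2"
proof -
  have "pderiv (pCons 0 (p m * p m)) = p m * p m + pCons 0 (pderiv (p m)) * p m + pCons 0 (pderiv (p m)) * p m"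
    by (simp add: pderiv_pCons pderiv_mult pCons0_mult mult.commute)
  then have "IP (pderiv (pCons 0 (p m * p m))) = IP (p m * p m) + IP (pCons 0 (pderiv (p m)) * p m) + IP (pCons 0 (pderiv (p m)) * p m)"
    by (simp only: IP_add)
  then have "IP (pderiv (pCons 0 (p m * p m))) = 1 + 2 * real m"
    using IP_Xpd[of m] IPpp[of m m] by (simp del: mult_pCons_left)
  then show ?thesis using IBP[of "pCons 0 (p m * p m)"] by simp
qed

lemma E2: "J (p (Suc m) * p m) = (real m + 1) / (2 * A m)"
proof -
  have "pderiv (p (Suc m) * p m) = pderiv (p m) * p (Suc m) + pderiv (p (Suc m)) * p m"
    by (simp add: pderiv_mult algebra_simps)
  moreover have "IP (pderiv (p m) * p (Suc m)) = 0"
  proof (rule ortho)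
    fix i assume "Suc m \<le> i"
    then show "coeff (pderiv (p m)) i = 0"
      using degree_pderiv[of "p m"] deg[of m] by (intro coeff_eq_0) auto
  qed
  moreover have "IP (pderiv (p (Suc m)) * p m) = (real m + 1) / A m"
  proof -
    have "IP (pderiv (p (Suc m)) * p m) = coeff (pderiv (p (Suc m))) m / lead_coeff (p m)"
      by (rule lead_IP) (use degree_pderiv[of "p (Suc m)"] deg in simp)
    also have "\<dots> = (real m + 1) / A m" using lc_ne[of m] lc_ne[of "Suc m"]
      by (simp add: coeff_pderiv deg A_def)
    finally show ?thesis .
  qed
  ultimately have "IP (pderiv (p (Suc m) * p m)) = (real m + 1) / A m" by (simp add: IP_add)
  then show ?thesis using IBP[of "p (Suc m) * p m"] by simp
qed

definition SQ :: "nat \<Rightarrow> real" where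
  "SQ m = (LINT x|lborel. \<bar>deriv Q x\<bar> * (poly (p m) x * poly (p m) x * w x))"

lemma ppw_nn: "0 \<le> poly (p m) x * poly (p m) x * w x"
  using w_pos[of x] by simp

lemma int_SQ: "integrable lborel (\<lambda>x. \<bar>deriv Q x\<bar> * (poly (p m) x * poly (p m) x * w x))"
proof -
  have "integrable lborel (\<lambda>x. \<bar>deriv Q x * poly (p m * p m) x * w x\<bar>)"
    using int_Q'hw by (rule integrable_abs)
  moreover have "\<bar>deriv Q x * poly (p m * p m) x * w x\<bar> = \<bar>deriv Q x\<bar> * (poly (p m) x * poly (p m) x * w x)" for x
  proof -
    have "deriv Q x * poly (p m * p m) x * w x = deriv Q x * (poly (p m) x * poly (p m) x * w x)"
      by (simp add: mult.assoc)
    then show ?thesis by (simp only: abs_mult[of "deriv Q x"] abs_of_nonneg[OF ppw_nn])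
  qed
  ultimately show ?thesis by simp
qed

lemma SQ_le: "SQ m \<le> K + real m + 1 / 2"
proof -
  have "SQ m \<le> (LINT x|lborel. K * (poly (p m * p m) x * w x) + deriv Q x * poly (pCons 0 (p m * p m)) x * w x)"
    unfolding SQ_def
  proof (rule integral_mono)
    show "integrable lborel (\<lambda>x. K * (poly (p m * p m) x * w x) + deriv Q x * poly (pCons 0 (p m * p m)) x * w x)"
      by (intro Bochner_Integration.integrable_add integrable_mult_right intpw int_Q'hw)
    fix x
    have "\<bar>deriv Q x\<bar> * (poly (p m) x * poly (p m) x * w x) \<le> (K + x * deriv Q x) * (poly (p m) x * poly (p m) x * w x)"
      by (intro mult_right_mono absQ'_le ppw_nn)
    then show "\<bar>deriv Q x\<bar> * (poly (p m) x * poly (p m) x * w x) \<le> K * (poly (p m * p m) x * w x) + deriv Q x * poly (pCons 0 (p m * p m)) x * w x"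
      by (simp add: algebra_simps)
  qed (rule int_SQ)
  also have "\<dots> = K * IP (p m * p m) + J (pCons 0 (p m * p m))"
    unfolding IP_def J_def
    by (subst Bochner_Integration.integral_add[OF integrable_mult_right[OF intpw] int_Q'hw]) simp
  also have "\<dots> = K + real m + 1 / 2" by (simp add: IPpp E1)
  finally show ?thesis .
qed

lemma J_le: "J (p (Suc m) * p m) \<le> (SQ m + SQ (Suc m)) / 2"
proof -
  have "J (p (Suc m) * p m) \<le> (LINT x|lborel. (\<bar>deriv Q x\<bar> * (poly (p m) x * poly (p m) x * w x)
          + \<bar>deriv Q x\<bar> * (poly (p (Suc m)) x * poly (p (Suc m)) x * w x)) / 2)"
    unfolding J_def
  proof (rule integral_mono)
    show "integrable lborel (\<lambda>x. deriv Q x * poly (p (Suc m) * p m) x * w x)" by (rule int_Q'hw)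
    show "integrable lborel (\<lambda>x. (\<bar>deriv Q x\<bar> * (poly (p m) x * poly (p m) x * w x)
          + \<bar>deriv Q x\<bar> * (poly (p (Suc m)) x * poly (p (Suc m)) x * w x)) / 2)"
      by (intro integrable_divide Bochner_Integration.integrable_add int_SQ)
    fix x
    define a where "a = poly (p m) x" define b where "b = poly (p (Suc m)) x"
    have "0 \<le> (\<bar>a\<bar> - \<bar>b\<bar>)\<^sup>2" by simp
    then have "2 * \<bar>b * a\<bar> \<le> a * a + b * b"
      by (simp add: power2_eq_square algebra_simps abs_mult abs_mult_self_eq)
    then have "\<bar>deriv Q x\<bar> * w x * (2 * \<bar>b * a\<bar>) \<le> \<bar>deriv Q x\<bar> * w x * (a * a + b * b)"
      using w_pos[of x] by (intro mult_left_mono) auto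
    moreover have "deriv Q x * (b * a) * w x \<le> \<bar>deriv Q x\<bar> * w x * \<bar>b * a\<bar>"
    proof -
      have "deriv Q x * (b * a) * w x \<le> \<bar>deriv Q x * (b * a) * w x\<bar>" by (rule abs_ge_self)
      also have "\<dots> = \<bar>deriv Q x\<bar> * w x * \<bar>b * a\<bar>" using w_pos[of x] by (simp add: abs_mult mult_ac)
      finally show ?thesis .
    qed
    ultimately have "deriv Q x * (b * a) * w x \<le> (\<bar>deriv Q x\<bar> * w x * (a * a + b * b)) / 2"
      by linarith
    also have "\<dots> = (\<bar>deriv Q x\<bar> * (a * a * w x) + \<bar>deriv Q x\<bar> * (b * b * w x)) / 2"
      by (simp add: algebra_simps)
    finally show "deriv Q x * poly (p (Suc m) * p m) x * w x \<le> (\<bar>deriv Q x\<bar> * (poly (p m) x * poly (p m) x * w x)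
          + \<bar>deriv Q x\<bar> * (poly (p (Suc m)) x * poly (p (Suc m)) x * w x)) / 2"
      unfolding a_def b_def by simp
  qed
  also have "\<dots> = (SQ m + SQ (Suc m)) / 2"
    unfolding SQ_def by (simp add: Bochner_Integration.integral_add int_SQ)
  finally show ?thesis .
qed

definition C1 :: real where "C1 = 1 / (2 * (K + 1))"

lemma A_lower: "C1 \<le> A m"
proof -
  have "(real m + 1) / (2 * A m) \<le> (SQ m + SQ (Suc m)) / 2"
    using E2[of m] J_le[of m] by simp
  moreover have "SQ m + SQ (Suc m) \<le> 2 * (K + real m + 1)"
    using SQ_le[of m] SQ_le[of "Suc m"] by simp
  then have "(SQ m + SQ (Suc m)) / 2 \<le> K + real m + 1" by simp
  ultimately have "(real m + 1) / (2 * A m) \<le> K + real m + 1"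
    by (rule order_trans)
  then have "real m + 1 \<le> (K + real m + 1) * (2 * A m)"
    using A_pos[of m] by (simp add: divide_le_eq)
  then have "(real m + 1) / (2 * (K + real m + 1)) \<le> A m"
  proof -
    assume h: "real m + 1 \<le> (K + real m + 1) * (2 * A m)"
    have pos: "0 < 2 * (K + real m + 1)" using K_pos by simp
    have "(K + real m + 1) * (2 * A m) = A m * (2 * (K + real m + 1))" by (simp add: algebra_simps)
    with h show ?thesis using pos by (simp add: divide_le_eq)
  qed
  moreover have "1 / (2 * (K + 1)) \<le> (real m + 1) / (2 * (K + real m + 1))"
    using K_pos by (simp add: divide_le_eq field_simps)
  ultimately show ?thesis unfolding C1_def by linarith
qed

definition r :: real where "r = 1 / \<Lambda>"

lemma r_props: "0 < r" "r < 1" "r * \<Lambda> = 1" using Lam by (auto simp: r_def)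

lemma pow_bound: "\<bar>x\<bar> powr \<Lambda> \<le> 1 + x * deriv Q x / (c0 * \<Lambda>)"
proof (cases "1 \<le> \<bar>x\<bar>")
  case True
  then have x0: "x \<noteq> 0" by auto
  have "c0 * \<bar>x\<bar> powr \<Lambda> * \<Lambda> \<le> Q x * \<Lambda>" using growth[OF True] Lam by (intro mult_right_mono) auto
  also have "\<dots> \<le> x * deriv Q x" using xQ'_ge[OF x0] by (simp add: mult.commute)
  finally have "\<bar>x\<bar> powr \<Lambda> \<le> x * deriv Q x / (c0 * \<Lambda>)"
    using c0_pos Lam by (simp add: pos_le_divide_eq mult_ac)
  then show ?thesis by linarith
next
  case False
  then have "\<bar>x\<bar> powr \<Lambda> \<le> 1" using Lam by (intro powr_le1) auto
  moreover have "0 \<le> x * deriv Q x / (c0 * \<Lambda>)" using xQ'_nn[of x] c0_pos Lam by simp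
  ultimately show ?thesis by linarith
qed

lemma young:
  assumes y: "1 \<le> y"
  shows "\<bar>x\<bar> \<le> y powr r + \<bar>x\<bar> powr \<Lambda> * y powr (r - 1)"
proof (cases "\<bar>x\<bar> \<le> y powr r")
  case True
  moreover have "0 \<le> \<bar>x\<bar> powr \<Lambda> * y powr (r - 1)" by simp
  ultimately show ?thesis by linarith
next
  case False
  have yr: "0 < y powr r" using y by simp
  then have xpos: "0 < \<bar>x\<bar>" using False by linarith
  have "(y powr r) powr (\<Lambda> - 1) \<le> \<bar>x\<bar> powr (\<Lambda> - 1)"
    using False Lam yr by (intro powr_mono2) auto
  moreover have "(y powr r) powr (\<Lambda> - 1) = y powr (1 - r)"
    using r_props by (simp add: powr_powr algebra_simps)
  ultimately have 1: "y powr (1 - r) \<le> \<bar>x\<bar> powr (\<Lambda> - 1)" by simp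
  have "\<bar>x\<bar> powr \<Lambda> = \<bar>x\<bar> * \<bar>x\<bar> powr (\<Lambda> - 1)"
    using powr_mult_base[OF abs_ge_zero, of x "\<Lambda> - 1"] by simp
  then have "\<bar>x\<bar> powr \<Lambda> * y powr (r - 1) = \<bar>x\<bar> * (\<bar>x\<bar> powr (\<Lambda> - 1) * y powr (r - 1))" by simp
  also have "\<dots> \<ge> \<bar>x\<bar> * (y powr (1 - r) * y powr (r - 1))"
    using 1 xpos by (intro mult_left_mono mult_right_mono) auto
  also have "y powr (1 - r) * y powr (r - 1) = 1" using y by (simp add: powr_add[symmetric])
  finally have "\<bar>x\<bar> \<le> \<bar>x\<bar> powr \<Lambda> * y powr (r - 1)" by simp
  then show ?thesis using yr by linarith
qed

definition D :: real where "D = 2 + 2 / (c0 * \<Lambda>)"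

definition MX :: "nat \<Rightarrow> real" where
  "MX m = (LINT x|lborel. \<bar>x\<bar> * (poly (p m) x * poly (p m) x * w x))"

lemma absx_ppw: "\<bar>poly (pCons 0 (p m * p m)) x * w x\<bar> = \<bar>x\<bar> * (poly (p m) x * poly (p m) x * w x)"
proof -
  have "poly (pCons 0 (p m * p m)) x * w x = x * (poly (p m) x * poly (p m) x * w x)" by simp
  then show ?thesis by (simp only: abs_mult[of x] abs_of_nonneg[OF ppw_nn])
qed

lemma int_MX: "integrable lborel (\<lambda>x. \<bar>x\<bar> * (poly (p m) x * poly (p m) x * w x))"
  using integrable_abs[OF intpw[of "pCons 0 (p m * p m)"]] by (simp only: absx_ppw)

lemma MX_le:
  assumes m: "1 \<le> m"
  shows "MX m \<le> D * real m powr r"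
proof -
  define y where "y = real m"
  have y: "1 \<le> y" using m by (simp add: y_def)
  define a where "a = y powr r + y powr (r - 1)"
  define b where "b = y powr (r - 1) / (c0 * \<Lambda>)"
  have "MX m \<le> (LINT x|lborel. a * (poly (p m * p m) x * w x) + b * (deriv Q x * poly (pCons 0 (p m * p m)) x * w x))"
    unfolding MX_def
  proof (rule integral_mono[OF int_MX])
    show "integrable lborel (\<lambda>x. a * (poly (p m * p m) x * w x) + b * (deriv Q x * poly (pCons 0 (p m * p m)) x * w x))"
      by (intro Bochner_Integration.integrable_add integrable_mult_right intpw int_Q'hw)
    fix x
    have "\<bar>x\<bar> \<le> y powr r + (1 + x * deriv Q x / (c0 * \<Lambda>)) * y powr (r - 1)"
    proof -
      have "\<bar>x\<bar> powr \<Lambda> * y powr (r - 1) \<le> (1 + x * deriv Q x / (c0 * \<Lambda>)) * y powr (r - 1)"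
        by (intro mult_right_mono pow_bound) simp
      then show ?thesis using young[OF y, of x] by linarith
    qed
    also have "\<dots> = a + b * (x * deriv Q x)" by (simp add: a_def b_def algebra_simps)
    finally have "\<bar>x\<bar> * (poly (p m) x * poly (p m) x * w x) \<le> (a + b * (x * deriv Q x)) * (poly (p m) x * poly (p m) x * w x)"
      by (intro mult_right_mono ppw_nn)
    then show "\<bar>x\<bar> * (poly (p m) x * poly (p m) x * w x) \<le> a * (poly (p m * p m) x * w x) + b * (deriv Q x * poly (pCons 0 (p m * p m)) x * w x)"
      by (simp add: algebra_simps)
  qed
  also have "\<dots> = a * IP (p m * p m) + b * J (pCons 0 (p m * p m))"
    unfolding IP_def J_def
    by (subst Bochner_Integration.integral_add[OF integrable_mult_right[OF intpw] integrable_mult_right[OF int_Q'hw]]) simp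
  also have "\<dots> = a + b * (y + 1 / 2)" by (simp add: IPpp E1 y_def)
  also have "\<dots> = y powr r + y powr (r - 1) * (1 + (y + 1/2) / (c0 * \<Lambda>))"
    by (simp add: a_def b_def algebra_simps)
  also have "\<dots> \<le> y powr r + y powr (r - 1) * (y * (1 + 2 / (c0 * \<Lambda>)))"
  proof -
    have cl: "0 < c0 * \<Lambda>" using c0_pos Lam by simp
    have "(y + 1/2) / (c0 * \<Lambda>) \<le> (2 * y) / (c0 * \<Lambda>)" using y cl by (intro divide_right_mono) auto
    then have "1 + (y + 1/2) / (c0 * \<Lambda>) \<le> y * (1 + 2 / (c0 * \<Lambda>))" using y by (simp add: algebra_simps)
    then show ?thesis by (intro add_left_mono mult_left_mono) auto
  qed
  also have "y powr (r - 1) * (y * (1 + 2 / (c0 * \<Lambda>))) = y powr r * (1 + 2 / (c0 * \<Lambda>))"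
  proof -
    have "y powr (r - 1) * y = y powr r" using powr_mult_base[of y "r - 1"] y by (simp add: mult.commute)
    then show ?thesis by (simp add: mult.assoc[symmetric])
  qed
  also have "y powr r + y powr r * (1 + 2 / (c0 * \<Lambda>)) = D * real m powr r"
    by (simp add: D_def y_def algebra_simps)
  finally show ?thesis .
qed

lemma B_le: "\<bar>B m\<bar> \<le> MX m"
  unfolding B_def IP_def MX_def
proof (rule integral_abs_bound_integral[OF intpw int_MX])
  fix x
  have "poly (pCons 0 (p m) * p m) x * w x = x * (poly (p m) x * poly (p m) x * w x)" by (simp add: mult_ac)
  then show "\<bar>poly (pCons 0 (p m) * p m) x * w x\<bar> \<le> \<bar>x\<bar> * (poly (p m) x * poly (p m) x * w x)"
    by (simp only: abs_mult[of x] abs_of_nonneg[OF ppw_nn])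
qed

lemma IP_A: "IP (pCons 0 (p m) * p (Suc m)) = A m"
proof -
  have "IP (pCons 0 (p m) * p (Suc m)) = coeff (pCons 0 (p m)) (Suc m) / lead_coeff (p (Suc m))"
    by (rule lead_IP) (metis Suc_le_mono deg degree_pCons_le le_trans order_refl)
  then show ?thesis by (simp add: A_def deg)
qed

lemma A_le_MX: "A m \<le> (MX m + MX (Suc m)) / 2"
proof -
  have "A m \<le> \<bar>IP (pCons 0 (p m) * p (Suc m))\<bar>" using IP_A by simp
  also have "\<dots> \<le> (LINT x|lborel. (\<bar>x\<bar> * (poly (p m) x * poly (p m) x * w x) + \<bar>x\<bar> * (poly (p (Suc m)) x * poly (p (Suc m)) x * w x)) / 2)"
    unfolding IP_def
  proof (rule integral_abs_bound_integral[OF intpw])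
    show "integrable lborel (\<lambda>x. (\<bar>x\<bar> * (poly (p m) x * poly (p m) x * w x) + \<bar>x\<bar> * (poly (p (Suc m)) x * poly (p (Suc m)) x * w x)) / 2)"
      by (intro integrable_divide Bochner_Integration.integrable_add int_MX)
    fix x
    define a where "a = poly (p m) x" define b where "b = poly (p (Suc m)) x"
    have "0 \<le> (\<bar>a\<bar> - \<bar>b\<bar>)\<^sup>2" by simp
    then have "2 * \<bar>a * b\<bar> \<le> a * a + b * b"
      by (simp add: power2_eq_square algebra_simps abs_mult abs_mult_self_eq)
    then have "\<bar>x\<bar> * w x * (2 * \<bar>a * b\<bar>) \<le> \<bar>x\<bar> * w x * (a * a + b * b)"
      using w_pos[of x] by (intro mult_left_mono) auto
    moreover have "\<bar>poly (pCons 0 (p m) * p (Suc m)) x * w x\<bar> = \<bar>x\<bar> * w x * \<bar>a * b\<bar>"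
      using w_pos[of x] by (simp add: a_def b_def abs_mult mult_ac)
    ultimately have "\<bar>poly (pCons 0 (p m) * p (Suc m)) x * w x\<bar> \<le> \<bar>x\<bar> * w x * (a * a + b * b) / 2"
      by linarith
    also have "\<dots> = (\<bar>x\<bar> * (a * a * w x) + \<bar>x\<bar> * (b * b * w x)) / 2" by (simp add: algebra_simps)
    finally show "\<bar>poly (pCons 0 (p m) * p (Suc m)) x * w x\<bar> \<le> (\<bar>x\<bar> * (poly (p m) x * poly (p m) x * w x) + \<bar>x\<bar> * (poly (p (Suc m)) x * poly (p (Suc m)) x * w x)) / 2"
      unfolding a_def b_def .
  qed
  also have "\<dots> = (MX m + MX (Suc m)) / 2"
    unfolding MX_def by (simp add: Bochner_Integration.integral_add int_MX)
  finally show ?thesis .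
qed

lemma D_pos: "0 < D" using c0_pos Lam by (simp add: D_def add_pos_nonneg)

lemma upper:
  assumes m: "1 \<le> m"
  shows "A m \<le> 2 * D * real m powr r" "\<bar>B m\<bar> \<le> 2 * D * real m powr r"
proof -
  have mr: "0 \<le> real m powr r" by simp
  have s: "real (Suc m) powr r \<le> 2 * real m powr r"
  proof -
    have "real (Suc m) powr r \<le> (2 * real m) powr r" using m r_props by (intro powr_mono2) auto
    also have "\<dots> = 2 powr r * real m powr r" by (simp add: powr_mult)
    also have "\<dots> \<le> 2 * real m powr r"
    proof -
      have "2 powr r \<le> 2 powr (1::real)" using r_props by (intro powr_mono) auto
      then show ?thesis by (intro mult_right_mono) auto
    qed
    finally show ?thesis .
  qed
  have "A m \<le> (D * real m powr r + D * real (Suc m) powr r) / 2"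
    using A_le_MX[of m] MX_le[OF m] MX_le[of "Suc m"] by simp
  also have "\<dots> \<le> (D * real m powr r + D * (2 * real m powr r)) / 2"
    using s D_pos by (intro divide_right_mono add_left_mono mult_left_mono) auto
  also have "\<dots> \<le> 2 * D * real m powr r" using D_pos mr by (simp add: algebra_simps)
  finally show "A m \<le> 2 * D * real m powr r" .
  have "\<bar>B m\<bar> \<le> D * real m powr r" using B_le[of m] MX_le[OF m] by simp
  also have "\<dots> \<le> 2 * D * real m powr r" using D_pos mr by simp
  finally show "\<bar>B m\<bar> \<le> 2 * D * real m powr r" .
qed

lemma C1_pos: "0 < C1" using K_pos by (simp add: C1_def)

end

theorem lemma7p3:
  fixes Q :: "real \<Rightarrow> real" and p :: "nat \<Rightarrow> real poly"
  assumes "class_FC2 Q"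
    and "orthonormal_polys Q p"
  shows "\<exists>A B :: nat \<Rightarrow> real.
           (\<forall>m. A m > 0) \<and>
           (\<forall>m x. x * poly (p m) x =
                  A m * poly (p (Suc m)) x + B m * poly (p m) x
                  + (if m = 0 then 0 else A (m - 1) * poly (p (m - 1)) x)) \<and>
           (\<exists>r C1 C2. 0 < r \<and> r < 1 \<and> 0 < C1 \<and> 0 < C2 \<and>
              (\<forall>m\<ge>1. C1 \<le> A m \<and> A m \<le> C2 * real m powr r \<and>
                      \<bar>B m\<bar> \<le> C2 * real m powr r))"
proof -
  from assms(1) obtain \<Lambda> where L: "\<Lambda> > 1" "\<And>t. t \<noteq> 0 \<Longrightarrow> \<Lambda> \<le> T_fun Q t"
    unfolding class_FC2_def by blast
  have d: "\<And>x. (Q has_real_derivative deriv Q x) (at x)"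
    using assms(1) unfolding class_FC2_def by (simp add: DERIV_deriv_iff_real_differentiable)
  have lcp: "\<And>m. lead_coeff (p m) > 0" and degp: "\<And>m. degree (p m) = m"
    using assms(2) unfolding orthonormal_polys_def by blast+
  interpret OP Q p \<Lambda>
  proof (unfold_locales)
    show "\<And>m. lead_coeff (p m) > 0" by (rule lcp)
  qed (use assms L d degp in \<open>auto simp: class_FC2_def orthonormal_polys_def\<close>)
  show ?thesis
  proof (intro exI conjI allI impI)
    show "0 < OP.A p m" for m using A_pos .
    show "x * poly (p m) x = OP.A p m * poly (p (Suc m)) x + OP.B Q p m * poly (p m) x
       + (if m = 0 then 0 else OP.A p (m - 1) * poly (p (m - 1)) x)" for m x
      using arg_cong[OF recur[of m], of "\<lambda>q. poly q x"] by (cases m) (simp_all add: poly_smult)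
    show "0 < r" "r < 1" using r_props by auto
    show "0 < C1" by (rule C1_pos)
    show "0 < 2 * D" using D_pos by simp
    fix m :: nat assume "1 \<le> m"
    show "C1 \<le> OP.A p m" by (rule A_lower)
    show "OP.A p m \<le> 2 * D * real m powr r" using upper \<open>1 \<le> m\<close> by auto
    show "\<bar>OP.B Q p m\<bar> \<le> 2 * D * real m powr r" using upper \<open>1 \<le> m\<close> by auto
  qed
qed

end
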